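(* Let $G$ be a finite undirected graph, let $\tau\ge 1$ and $k$ be integers, and let $G'$ be the $(k,\tau)$-truss of $G$. Then for every connected component $G''$ of $G'$, the diameter satisfies $\omega(G'')\le \frac{2\tau(|V(G'')|-1)}{k}$.
   Context: Graphs are finite, simple, undirected and unweighted. A path may repeat vertices; its length is its number of edges. The diameter $\omega(H)$ of a connected graph $H$ is the maximum, over pairs of vertices, of the length of a shortest path between them in $H$. For vertices $v,u$ of a graph $H$, $u$ is $\tau$-hop reachable from $v$ in $H$ if $H$ contains a path between $u$ and $v$ of length at most $\tau$. $N_\tau(v,H)$ is the set of vertices $u\neq v$ that are $\tau$-hop reachable from $v$ in $H$. For an edge $e=(u,v)$ of $H$, $\Delta_\tau(e,H)=N_\tau(u,H)\cap N_\tau(v,H)$ and $\mathrm{sup}_\tau(e,H)=|\Delta_\tau(e,H)|$. The $(k,\tau)$-truss of $G$ is the maximal subgraph $G'$ of $G$ such that $\mathrm{sup}_\tau(e,G')\ge k-2$ for every edge $e\in E(G')$ (supports computed inside $G'$) and no more edges of $G$ can be added while keeping this property; a subgraph is determined by its edge set, its vertex set being the set of endpoints of its edges. *)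

theory Defs
  imports Complex_Main
begin

text \<open>A finite simple undirected graph is represented by its edge set: a finite set of
  2-element vertex sets. A subgraph is determined by its edge set; its vertices are the
  endpoints of its edges.\<close>

type_synonym 'a graph = "'a set set"

definition simple_graph :: "'a graph \<Rightarrow> bool" where
  "simple_graph G \<longleftrightarrow> finite G \<and> (\<forall>e\<in>G. card e = 2)"

definition verts :: "'a graph \<Rightarrow> 'a set" where
  "verts H = \<Union>H"

definition walk :: "'a graph \<Rightarrow> 'a list \<Rightarrow> bool" where
  "walk H xs \<longleftrightarrow> xs \<noteq> [] \<and> (\<forall>i. Suc i < length xs \<longrightarrow> {xs ! i, xs ! Suc i} \<in> H)"

definition walk_len :: "'a list \<Rightarrow> nat" where
  "walk_len xs = length xs - 1"

definition hop_reachable :: "'a graph \<Rightarrow> nat \<Rightarrow> 'a \<Rightarrow> 'a \<Rightarrow> bool" where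
  "hop_reachable H \<tau> v u \<longleftrightarrow>
     (\<exists>xs. walk H xs \<and> hd xs = v \<and> last xs = u \<and> walk_len xs \<le> \<tau>)"

definition nbhd :: "'a graph \<Rightarrow> nat \<Rightarrow> 'a \<Rightarrow> 'a set" where
  "nbhd H \<tau> v = {u. u \<noteq> v \<and> hop_reachable H \<tau> v u}"

definition support :: "'a graph \<Rightarrow> nat \<Rightarrow> 'a \<Rightarrow> 'a \<Rightarrow> nat" where
  "support H \<tau> u v = card (nbhd H \<tau> u \<inter> nbhd H \<tau> v)"

definition truss_property :: "'a graph \<Rightarrow> int \<Rightarrow> nat \<Rightarrow> bool" where
  "truss_property H k \<tau> \<longleftrightarrow> (\<forall>u v. {u, v} \<in> H \<longrightarrow> int (support H \<tau> u v) \<ge> k - 2)"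

definition is_truss :: "'a graph \<Rightarrow> int \<Rightarrow> nat \<Rightarrow> 'a graph \<Rightarrow> bool" where
  "is_truss G k \<tau> T \<longleftrightarrow> T \<subseteq> G \<and> truss_property T k \<tau> \<and>
     (\<forall>T'. T \<subseteq> T' \<and> T' \<subseteq> G \<and> truss_property T' k \<tau> \<longrightarrow> T' = T)"

definition connected_in :: "'a graph \<Rightarrow> 'a \<Rightarrow> 'a \<Rightarrow> bool" where
  "connected_in H u v \<longleftrightarrow> (\<exists>xs. walk H xs \<and> hd xs = u \<and> last xs = v)"

definition is_component :: "'a graph \<Rightarrow> 'a graph \<Rightarrow> bool" where
  "is_component H C \<longleftrightarrow> (\<exists>v\<in>verts H.
     C = {e\<in>H. e \<subseteq> {u\<in>verts H. connected_in H v u}})"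

definition dist :: "'a graph \<Rightarrow> 'a \<Rightarrow> 'a \<Rightarrow> nat" where
  "dist H u v = (LEAST n. \<exists>xs. walk H xs \<and> hd xs = u \<and> last xs = v \<and> walk_len xs = n)"

definition diameter :: "'a graph \<Rightarrow> nat" where
  "diameter H = Max {dist H u v | u v. u \<in> verts H \<and> v \<in> verts H}"

end

theory Submission imports Defs begin

lemma walk_single[simp]: "walk H [x]"
  by (simp add: walk_def)

lemma walk_mono: "walk H xs \<Longrightarrow> H \<subseteq> H' \<Longrightarrow> walk H' xs"
  by (auto simp: walk_def)

lemma walk_rev: "walk H xs \<Longrightarrow> walk H (rev xs)"
  unfolding walk_def
proof (intro conjI allI impI)
  fix i assume a: "xs \<noteq> [] \<and> (\<forall>i. Suc i < length xs \<longrightarrow> {xs ! i, xs ! Suc i} \<in> H)"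
    and i: "Suc i < length (rev xs)"
  then have "{xs ! (length xs - Suc (Suc i)), xs ! Suc (length xs - Suc (Suc i))} \<in> H" by auto
  moreover have "Suc (length xs - Suc (Suc i)) = length xs - Suc i" using i by auto
  ultimately show "{rev xs ! i, rev xs ! Suc i} \<in> H" using i by (auto simp: rev_nth insert_commute)
next
  assume "xs \<noteq> [] \<and> (\<forall>i. Suc i < length xs \<longrightarrow> {xs ! i, xs ! Suc i} \<in> H)"
  then show "rev xs \<noteq> []" by simp
qed

lemma walk_append:
  assumes "walk H xs" "walk H ys" "last xs = hd ys"
  shows "walk H (xs @ tl ys)"
  unfolding walk_def
proof (intro conjI allI impI)
  show "xs @ tl ys \<noteq> []" using assms by (auto simp: walk_def)
  fix i assume i: "Suc i < length (xs @ tl ys)"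
  show "{(xs @ tl ys) ! i, (xs @ tl ys) ! Suc i} \<in> H"
  proof (cases "Suc i < length xs")
    case True then show ?thesis using assms(1) by (auto simp: walk_def nth_append)
  next
    case False
    have ys: "ys \<noteq> []" using assms by (auto simp: walk_def)
    show ?thesis
    proof (cases "i < length xs")
      case True
      then have "i = length xs - 1" using False by auto
      then have "(xs @ tl ys) ! i = ys ! 0" using True assms(3) ys assms(1)
        by (auto simp: nth_append walk_def last_conv_nth hd_conv_nth)
      moreover have "(xs @ tl ys) ! Suc i = ys ! 1" using False True i ys
        by (auto simp: nth_append nth_tl)
      moreover have "Suc 0 < length ys" using i False by auto
      ultimately show ?thesis using assms(2) by (auto simp: walk_def)
    next
      case F2: False
      have "(xs @ tl ys) ! i = ys ! (Suc (i - length xs))" using F2 ys i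
        by (auto simp: nth_append nth_tl)
      moreover have "(xs @ tl ys) ! Suc i = ys ! Suc (Suc (i - length xs))" using F2 ys i
        by (auto simp: nth_append nth_tl Suc_diff_le)
      moreover have "Suc (Suc (i - length xs)) < length ys" using i F2 by auto
      ultimately show ?thesis using assms(2) by (auto simp: walk_def)
    qed
  qed
qed

lemma walk_append_ends:
  assumes "walk H xs" "walk H ys" "last xs = hd ys"
  shows "hd (xs @ tl ys) = hd xs" "last (xs @ tl ys) = last ys"
    "walk_len (xs @ tl ys) = walk_len xs + walk_len ys"
proof -
  obtain y ys' where ys: "ys = y # ys'" using assms(2) by (cases ys) (auto simp: walk_def)
  have xs: "xs \<noteq> []" using assms(1) by (auto simp: walk_def)
  show "hd (xs @ tl ys) = hd xs" using xs by simp
  show "last (xs @ tl ys) = last ys" using xs ys assms(3) by (cases "ys' = []") auto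
  show "walk_len (xs @ tl ys) = walk_len xs + walk_len ys" using xs ys
    by (cases xs) (auto simp: walk_len_def)
qed

lemma walk_take: "walk H xs \<Longrightarrow> 0 < n \<Longrightarrow> walk H (take n xs)"
  by (auto simp: walk_def)

lemma walk_drop: "walk H xs \<Longrightarrow> n < length xs \<Longrightarrow> walk H (drop n xs)"
  by (auto simp: walk_def)


lemma last_take_Suc: "a < length xs \<Longrightarrow> last (take (Suc a) xs) = xs ! a"
  by (subst last_conv_nth) (auto simp: min_def le_Suc_eq)

lemma reach_verts:
  assumes "hop_reachable H t v u" "u \<noteq> v" shows "u \<in> verts H"
proof -
  obtain xs where xs: "walk H xs" "hd xs = v" "last xs = u"
    using assms(1) by (auto simp: hop_reachable_def)
  have ne: "xs \<noteq> []" using xs by (auto simp: walk_def)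
  have "length xs \<noteq> 1"
  proof
    assume "length xs = 1"
    then obtain y where "xs = [y]" by (cases xs) auto
    then show False using xs assms(2) by simp
  qed
  then have l: "Suc (length xs - 2) < length xs" using ne by (cases xs) auto
  then have "{xs ! (length xs - 2), xs ! Suc (length xs - 2)} \<in> H" using xs(1) by (auto simp: walk_def)
  moreover have "Suc (length xs - 2) = length xs - 1" using l by auto
  ultimately have "{xs ! (length xs - 2), u} \<in> H" using xs ne by (simp add: last_conv_nth)
  then show ?thesis by (auto simp: verts_def)
qed

lemma reach_sym: "hop_reachable H t v u \<Longrightarrow> hop_reachable H t u v"
  unfolding hop_reachable_def
proof (elim exE conjE)
  fix xs assume "walk H xs" "hd xs = v" "last xs = u" "walk_len xs \<le> t"
  then show "\<exists>xs. walk H xs \<and> hd xs = u \<and> last xs = v \<and> walk_len xs \<le> t"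
    by (intro exI[of _ "rev xs"]) (auto simp: walk_rev walk_len_def hd_rev last_rev)
qed

lemma reach_trans:
  assumes "hop_reachable H a x y" "hop_reachable H b y z"
  shows "\<exists>ws. walk H ws \<and> hd ws = x \<and> last ws = z \<and> walk_len ws \<le> a + b"
proof -
  obtain xs where xs: "walk H xs" "hd xs = x" "last xs = y" "walk_len xs \<le> a"
    using assms(1) by (auto simp: hop_reachable_def)
  obtain ys where ys: "walk H ys" "hd ys = y" "last ys = z" "walk_len ys \<le> b"
    using assms(2) by (auto simp: hop_reachable_def)
  have "last xs = hd ys" using xs ys by simp
  then show ?thesis using walk_append[OF xs(1) ys(1)] walk_append_ends[OF xs(1) ys(1)] xs ys
    by (intro exI[of _ "xs @ tl ys"]) auto
qed

lemma card_sub_interval: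
  fixes I :: "nat set"
  assumes "0 < m" "finite I" "\<And>i j. i \<in> I \<Longrightarrow> j \<in> I \<Longrightarrow> i < j \<Longrightarrow> j - i < m"
  shows "card I \<le> m"
proof (cases "I = {}")
  case True then show ?thesis by simp
next
  case False
  define a where "a = Min I"
  have "I \<subseteq> {a..<a+m}"
  proof
    fix j assume j: "j \<in> I"
    have "a \<le> j" using assms(2) j by (simp add: a_def)
    moreover have "a \<in> I" using assms(2) False by (simp add: a_def)
    moreover have "j < a + m"
    proof (cases "a < j")
      case True then show ?thesis using assms(3)[OF \<open>a \<in> I\<close> j] by auto
    next
      case False
      then have "j = a" using \<open>a \<le> j\<close> by auto
      moreover have "0 < m" using assms(1) .
      ultimately show ?thesis by auto
    qed
    ultimately show "j \<in> {a..<a+m}" by auto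
  qed
  then show ?thesis using card_mono[of "{a..<a+m}" I] by auto
qed

lemma core:
  fixes H :: "'a graph" and xs :: "'a list" and k :: int
  assumes fin: "finite (verts H)" and tp: "truss_property H k \<tau>" and tau: "\<tau> \<ge> 1"
    and w: "walk H xs" and len: "length xs = Suc D" and D: "D \<ge> 1"
    and geo: "\<And>ys. walk H ys \<Longrightarrow> hd ys = hd xs \<Longrightarrow> last ys = last xs \<Longrightarrow> D \<le> walk_len ys"
  shows "int D * k \<le> int (2*\<tau>*(card (verts H) - 1))"
proof -
  define P where "P i = xs ! i" for i
  have xsne: "xs \<noteq> []" using len by auto
  have hdP: "hd xs = P 0" using xsne by (simp add: P_def hd_conv_nth)
  have lastP: "last xs = P D" using xsne len by (simp add: P_def last_conv_nth)
  have geo': "b - a \<le> walk_len ys"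
    if ab: "a \<le> b" "b \<le> D" and ys: "walk H ys" "hd ys = P a" "last ys = P b" for a b ys
  proof -
    have w1: "walk H (take (Suc a) xs)" using walk_take[OF w] by simp
    have l1: "last (take (Suc a) xs) = hd ys" using ab ys len by (simp add: P_def last_take_Suc)
    define W1 where "W1 = take (Suc a) xs @ tl ys"
    have w2: "walk H W1" using walk_append[OF w1 ys(1) l1] by (simp add: W1_def)
    have e1: "hd W1 = hd xs" "last W1 = P b" "walk_len W1 = a + walk_len ys"
      using walk_append_ends[OF w1 ys(1) l1] ys ab len xsne
      by (auto simp: W1_def walk_len_def min_def)
    have w3: "walk H (drop b xs)" using walk_drop[OF w] ab len by simp
    have l2: "last W1 = hd (drop b xs)" using e1 ab len by (simp add: P_def hd_drop_conv_nth)
    define W where "W = W1 @ tl (drop b xs)"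
    have "walk H W" using walk_append[OF w2 w3 l2] by (simp add: W_def)
    moreover have "hd W = hd xs" "last W = last xs" "walk_len W = a + walk_len ys + (D - b)"
      using walk_append_ends[OF w2 w3 l2] e1 ab len by (auto simp: W_def walk_len_def)
    ultimately have "D \<le> a + walk_len ys + (D - b)" using geo by metis
    then show ?thesis using ab by linarith
  qed
  define S where "S i = {P i, P (Suc i)} \<union> (nbhd H \<tau> (P i) \<inter> nbhd H \<tau> (P (Suc i)))" for i
  define V where "V = verts H"
  have edge: "{P i, P (Suc i)} \<in> H" if "i < D" for i
    using w that len by (auto simp: walk_def P_def)
  have distinct: "P i \<noteq> P (Suc i)" if "i < D" for i
  proof
    assume "P i = P (Suc i)"
    then have "Suc i - i \<le> walk_len [P i]"
      using geo'[of i "Suc i" "[P i]"] that by simp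
    then show False by (simp add: walk_len_def)
  qed
  have PV: "P i \<in> V" "P (Suc i) \<in> V" if "i < D" for i
    using edge[OF that] by (auto simp: V_def verts_def)
  have SV: "S i \<subseteq> V" if "i < D" for i
    using PV[OF that] reach_verts by (auto simp: S_def nbhd_def V_def)
  have finV: "finite V" using fin by (simp add: V_def)
  have cardS: "k \<le> int (card (S i))" if "i < D" for i
  proof -
    have fN: "finite (nbhd H \<tau> (P i) \<inter> nbhd H \<tau> (P (Suc i)))"
      using SV[OF that] finV by (auto simp: S_def intro: finite_subset)
    have "card (S i) = card {P i, P (Suc i)} + card (nbhd H \<tau> (P i) \<inter> nbhd H \<tau> (P (Suc i)))"
      unfolding S_def by (rule card_Un_disjoint) (use fN in \<open>auto simp: nbhd_def\<close>)
    moreover have "card {P i, P (Suc i)} = 2" using distinct[OF that] by simp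
    moreover have "int (support H \<tau> (P i) (P (Suc i))) \<ge> k - 2"
      using tp edge[OF that] by (auto simp: truss_property_def)
    ultimately show ?thesis by (simp add: support_def)
  qed
  define R where "R i u \<longleftrightarrow> hop_reachable H \<tau> (P i) u \<and> hop_reachable H \<tau> (P (Suc i)) u" for i u
  have SR: "R i u" if "u \<in> S i" "i < D" for i u
  proof -
    have r0: "hop_reachable H \<tau> x x" for x
      unfolding hop_reachable_def by (intro exI[of _ "[x]"]) (auto simp: walk_len_def)
    have r1: "hop_reachable H \<tau> (P i) (P (Suc i))"
      unfolding hop_reachable_def using edge[OF that(2)] tau
      by (intro exI[of _ "[P i, P (Suc i)]"]) (auto simp: walk_len_def walk_def less_Suc_eq)
    show ?thesis using that r0 r1 reach_sym[OF r1] by (auto simp: S_def R_def nbhd_def)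
  qed
  define c where "c u = card {i\<in>{..<D}. u \<in> S i}" for u
  have c_gen: "c u \<le> 2 * \<tau>" for u
    unfolding c_def
  proof (rule card_sub_interval)
    show "0 < 2 * \<tau>" using tau by simp
    fix i j assume i: "i \<in> {i\<in>{..<D}. u \<in> S i}" and j: "j \<in> {i\<in>{..<D}. u \<in> S i}" and ij: "i < j"
    have "R i u" "R j u" using SR i j by auto
    then have "hop_reachable H \<tau> (P i) u" "hop_reachable H \<tau> u (P (Suc j))"
      using reach_sym by (auto simp: R_def)
    then obtain ws where ws: "walk H ws" "hd ws = P i" "last ws = P (Suc j)" "walk_len ws \<le> \<tau> + \<tau>"
      using reach_trans[of H \<tau> "P i" u \<tau> "P (Suc j)"] by blast
    have "Suc j - i \<le> walk_len ws" using geo'[OF _ _ ws(1-3)] ij j by auto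
    then show "j - i < 2 * \<tau>" using ws(4) ij by simp
  qed simp
  have c0: "c (P 0) \<le> \<tau>"
    unfolding c_def
  proof -
    have "{i\<in>{..<D}. P 0 \<in> S i} \<subseteq> {..<\<tau>}"
    proof
      fix i assume i: "i \<in> {i\<in>{..<D}. P 0 \<in> S i}"
      then have "hop_reachable H \<tau> (P (Suc i)) (P 0)" using SR by (auto simp: R_def)
      then have "hop_reachable H \<tau> (P 0) (P (Suc i))" by (rule reach_sym)
      then obtain ws where ws: "walk H ws" "hd ws = P 0" "last ws = P (Suc i)" "walk_len ws \<le> \<tau>"
        by (auto simp: hop_reachable_def)
      have "Suc i - 0 \<le> walk_len ws" using geo'[OF _ _ ws(1-3)] i by auto
      then show "i \<in> {..<\<tau>}" using ws(4) by simp
    qed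
    then show "card {i\<in>{..<D}. P 0 \<in> S i} \<le> \<tau>" using card_mono[of "{..<\<tau>}"] by fastforce
  qed
  have cD: "c (P D) \<le> \<tau>"
    unfolding c_def
  proof -
    have "{i\<in>{..<D}. P D \<in> S i} \<subseteq> {D-\<tau>..<D}"
    proof
      fix i assume i: "i \<in> {i\<in>{..<D}. P D \<in> S i}"
      then have "hop_reachable H \<tau> (P i) (P D)" using SR by (auto simp: R_def)
      then obtain ws where ws: "walk H ws" "hd ws = P i" "last ws = P D" "walk_len ws \<le> \<tau>"
        by (auto simp: hop_reachable_def)
      have "D - i \<le> walk_len ws" using geo'[OF _ _ ws(1-3)] i by auto
      then show "i \<in> {D-\<tau>..<D}" using ws(4) i by auto
    qed
    then have "card {i\<in>{..<D}. P D \<in> S i} \<le> card {D-\<tau>..<D}" by (intro card_mono) auto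
    then show "card {i\<in>{..<D}. P D \<in> S i} \<le> \<tau>" by simp
  qed
  have P0D: "P 0 \<noteq> P D"
  proof
    assume "P 0 = P D"
    then have "D - 0 \<le> walk_len [P 0]" using geo'[of 0 D "[P 0]"] by simp
    then show False using D by (simp add: walk_len_def)
  qed
  have P0V: "P 0 \<in> V" using PV(1)[of 0] D by simp
  have PDV: "P D \<in> V" using PV(2)[of "D - 1"] D by simp
  have swap: "(\<Sum>i<D. card (S i)) = (\<Sum>u\<in>V. c u)"
  proof -
    have "(\<Sum>i<D. card (S i)) = (\<Sum>i<D. \<Sum>u\<in>V. if u \<in> S i then 1 else 0)"
    proof (rule sum.cong)
      fix i assume "i \<in> {..<D}"
      then have "S i \<subseteq> V" using SV by auto
      then have "{u\<in>V. u \<in> S i} = S i" by auto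
      then show "card (S i) = (\<Sum>u\<in>V. if u \<in> S i then 1 else 0)"
        using sum.inter_filter[OF finV, of "\<lambda>_. 1::nat" "\<lambda>u. u \<in> S i"] by simp
    qed simp
    also have "\<dots> = (\<Sum>u\<in>V. \<Sum>i<D. if u \<in> S i then 1 else 0)" by (rule sum.swap)
    also have "\<dots> = (\<Sum>u\<in>V. c u)"
      unfolding c_def using sum.inter_filter[of "{..<D}" "\<lambda>_. 1::nat"] by simp
    finally show ?thesis .
  qed
  have "(\<Sum>u\<in>V. c u) = c (P 0) + c (P D) + (\<Sum>u\<in>V - {P 0, P D}. c u)"
  proof -
    have "(\<Sum>u\<in>V. c u) = (\<Sum>u\<in>{P 0, P D}. c u) + (\<Sum>u\<in>V - {P 0, P D}. c u)"
      using sum.subset_diff[of "{P 0, P D}" V c] finV P0V PDV by auto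
    then show ?thesis using P0D by simp
  qed
  also have "\<dots> \<le> \<tau> + \<tau> + (\<Sum>u\<in>V - {P 0, P D}. 2 * \<tau>)"
    using c0 cD c_gen by (intro add_mono sum_mono) auto
  also have "\<dots> = \<tau> + \<tau> + 2 * \<tau> * (card V - 2)"
    using finV P0V PDV P0D by (simp add: card_Diff_subset numeral_2_eq_2)
  also have "\<dots> = 2 * \<tau> * (card V - 1)"
  proof -
    have "card {P 0, P D} \<le> card V" using finV P0V PDV by (intro card_mono) auto
    then have "card V \<ge> 2" using P0D by simp
    then obtain m where m: "card V = m + 2" by (metis add.commute le_add_diff_inverse)
    show ?thesis unfolding m by (simp add: algebra_simps)
  qed
  finally have le: "(\<Sum>i<D. card (S i)) \<le> 2 * \<tau> * (card V - 1)" using swap by simp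
  have "int D * k = (\<Sum>i<D. k)" by simp
  also have "\<dots> \<le> (\<Sum>i<D. int (card (S i)))" using cardS by (intro sum_mono) auto
  also have "\<dots> = int (\<Sum>i<D. card (S i))" by simp
  also have "\<dots> \<le> int (2 * \<tau> * (card V - 1))" using le by linarith
  finally show ?thesis by (simp add: V_def)
qed


lemma comp_walk:
  assumes K: "K = {u\<in>verts T. connected_in T v0 u}"
    and w: "walk T ys" and h: "hd ys \<in> K"
  shows "\<forall>i<length ys. ys ! i \<in> K"
proof (intro allI impI)
  fix i assume "i < length ys"
  then show "ys ! i \<in> K"
  proof (induction i)
    case 0
    then show ?case using h by (simp add: hd_conv_nth)
  next
    case (Suc i)
    then have IH: "ys ! i \<in> K" by simp
    have e: "{ys ! i, ys ! Suc i} \<in> T" using w Suc.prems by (auto simp: walk_def)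
    obtain zs where zs: "walk T zs" "hd zs = v0" "last zs = ys ! i"
      using IH K by (auto simp: connected_in_def)
    have w2: "walk T [ys ! i, ys ! Suc i]" using e by (auto simp: walk_def less_Suc_eq)
    have l: "last zs = hd [ys ! i, ys ! Suc i]" using zs by simp
    have "connected_in T v0 (ys ! Suc i)"
      unfolding connected_in_def
      using walk_append[OF zs(1) w2 l] walk_append_ends[OF zs(1) w2 l] zs
      by (intro exI[of _ "zs @ tl [ys ! i, ys ! Suc i]"]) auto
    moreover have "ys ! Suc i \<in> verts T" using e by (auto simp: verts_def)
    ultimately show ?case using K by simp
  qed
qed

lemma comp_walkC:
  assumes K: "K = {u\<in>verts T. connected_in T v0 u}" and C: "C = {e\<in>T. e \<subseteq> K}"
    and w: "walk T ys" and h: "hd ys \<in> K"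
  shows "walk C ys"
proof -
  have all: "\<forall>i<length ys. ys ! i \<in> K" by (rule comp_walk[OF K w h])
  show ?thesis using w all C unfolding walk_def by auto
qed

theorem mainTheorem2:
  fixes G T C :: "'a graph" and k :: int and \<tau> :: nat
  assumes "simple_graph G"
    and "\<tau> \<ge> 1"
    and "k > 0"
    and "is_truss G k \<tau> T"
    and "is_component T C"
  shows "real (diameter C) \<le> 2 * real \<tau> * (real (card (verts C)) - 1) / real_of_int k"
proof -
  have finG: "finite G" and card2: "\<And>e. e \<in> G \<Longrightarrow> card e = 2"
    using assms(1) by (auto simp: simple_graph_def)
  have TG: "T \<subseteq> G" and tpT: "truss_property T k \<tau>" using assms(4) by (auto simp: is_truss_def)
  obtain v0 where v0: "v0 \<in> verts T" and Cdef: "C = {e\<in>T. e \<subseteq> {u\<in>verts T. connected_in T v0 u}}"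
    using assms(5) by (auto simp: is_component_def)
  define K where "K = {u\<in>verts T. connected_in T v0 u}"
  have C: "C = {e\<in>T. e \<subseteq> K}" using Cdef K_def by simp
  have CT: "C \<subseteq> T" using C by auto
  have VK: "verts C \<subseteq> K" using C by (auto simp: verts_def)
  have hopeq: "hop_reachable C t x u \<longleftrightarrow> hop_reachable T t x u" if "x \<in> K" for t x u
    unfolding hop_reachable_def
    using comp_walkC[OF K_def C] walk_mono[OF _ CT] that by metis
  have nbeq: "nbhd C \<tau> x = nbhd T \<tau> x" if "x \<in> K" for x
    using hopeq[OF that] by (auto simp: nbhd_def)
  have tpC: "truss_property C k \<tau>"
    unfolding truss_property_def
  proof (intro allI impI)
    fix u v assume uv: "{u, v} \<in> C"
    then have "u \<in> K" "v \<in> K" using VK by (auto simp: verts_def)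
    then have "support C \<tau> u v = support T \<tau> u v" by (simp add: support_def nbeq)
    then show "k - 2 \<le> int (support C \<tau> u v)" using tpT uv CT by (auto simp: truss_property_def)
  qed
  have finC: "finite (verts C)"
  proof -
    have "finite C" using finite_subset[OF CT finite_subset[OF TG finG]] .
    moreover have "\<forall>e\<in>C. finite e"
    proof
      fix e assume "e \<in> C"
      then have "card e = 2" using card2 TG CT by blast
      then show "finite e" by (intro card_ge_0_finite) simp
    qed
    ultimately show ?thesis by (simp add: verts_def)
  qed
  have v0K: "v0 \<in> K" using v0 unfolding K_def connected_in_def
    by (auto intro: exI[of _ "[v0]"])
  have Cne: "verts C \<noteq> {}"
  proof -
    obtain e where e: "e \<in> T" "v0 \<in> e" using v0 by (auto simp: verts_def)
    have "card e = 2" using card2 e TG by auto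
    then obtain a b where ab: "e = {a, b}" "a \<noteq> b" by (meson card_2_iff)
    have "e \<subseteq> K"
    proof
      fix w assume "w \<in> e"
      have "walk T [a, b]" using e ab by (auto simp: walk_def less_Suc_eq)
      moreover have "walk T [b, a]" using walk_rev[OF calculation] by simp
      ultimately have "walk T [v0, w] \<or> w = v0" using \<open>w \<in> e\<close> e ab by auto
      then show "w \<in> K"
      proof (elim disjE)
        assume wk: "walk T [v0, w]"
        have "w \<in> verts T" using \<open>w \<in> e\<close> e by (auto simp: verts_def)
        moreover have "connected_in T v0 w" using wk unfolding connected_in_def
          by (intro exI[of _ "[v0, w]"]) simp
        ultimately show ?thesis by (simp add: K_def)
      qed (simp add: v0K)
    qed
    then have "e \<in> C" using C e by simp
    then show ?thesis using e by (auto simp: verts_def)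
  qed
  have conn: "\<exists>xs. walk C xs \<and> hd xs = u \<and> last xs = v" if "u \<in> verts C" "v \<in> verts C" for u v
  proof -
    have "u \<in> K" "v \<in> K" using that VK by auto
    then obtain zu zv where zu: "walk T zu" "hd zu = v0" "last zu = u"
      and zv: "walk T zv" "hd zv = v0" "last zv = v"
      by (auto simp: K_def connected_in_def)
    have wr: "walk T (rev zu)" using walk_rev[OF zu(1)] .
    have zne: "zu \<noteq> []" using zu by (auto simp: walk_def)
    have l: "last (rev zu) = hd zv" using zu zv zne by (simp add: last_rev)
    have hr: "hd (rev zu) = u" using zu zne by (simp add: hd_rev)
    have "walk T (rev zu @ tl zv)" "hd (rev zu @ tl zv) = u" "last (rev zu @ tl zv) = v"
      using walk_append[OF wr zv(1) l] walk_append_ends[OF wr zv(1) l] hr zv by auto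
    moreover have "walk C (rev zu @ tl zv)"
      using comp_walkC[OF K_def C] calculation \<open>u \<in> K\<close> by metis
    ultimately show ?thesis by blast
  qed
  define V where "V = verts C"
  define DS where "DS = {dist C u v | u v. u \<in> V \<and> v \<in> V}"
  have "DS = (\<lambda>(u, v). dist C u v) ` (V \<times> V)" by (auto simp: DS_def)
  then have finDS: "finite DS" using finC by (simp add: V_def)
  have neDS: "DS \<noteq> {}" using Cne by (auto simp: DS_def V_def)
  have "diameter C = Max DS" by (simp add: diameter_def DS_def V_def)
  then have "diameter C \<in> DS" using Max_in[OF finDS neDS] by simp
  then obtain u v where uv: "u \<in> V" "v \<in> V" "diameter C = dist C u v" by (auto simp: DS_def)
  define D where "D = diameter C"
  have ex: "\<exists>n. \<exists>xs. walk C xs \<and> hd xs = u \<and> last xs = v \<and> walk_len xs = n"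
    using conn[of u v] uv by (auto simp: V_def)
  obtain xs where xs: "walk C xs" "hd xs = u" "last xs = v" "walk_len xs = D"
    using LeastI_ex[OF ex] uv(3) by (auto simp: D_def dist_def)
  have geo: "D \<le> walk_len ys" if "walk C ys" "hd ys = hd xs" "last ys = last xs" for ys
    using Least_le[of "\<lambda>n. \<exists>xs. walk C xs \<and> hd xs = u \<and> last xs = v \<and> walk_len xs = n"] that xs uv(3)
    by (auto simp: D_def dist_def)
  have cV: "card V \<ge> 1" using Cne finC by (simp add: V_def Suc_le_eq card_gt_0_iff)
  have kpos: "real_of_int k > 0" using assms(3) by simp
  show ?thesis
  proof (cases "D = 0")
    case True
    have "0 \<le> 2 * real \<tau> * (real (card (verts C)) - 1) / real_of_int k"
      using cV kpos by (simp add: V_def)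
    then show ?thesis using True by (simp add: D_def)
  next
    case False
    have len: "length xs = Suc D" using xs False by (simp add: walk_len_def walk_def)
    have "int D * k \<le> int (2*\<tau>*(card (verts C) - 1))"
      by (rule core[OF finC tpC assms(2) xs(1) len _ geo]) (use False in auto)
    then have "real D * real_of_int k \<le> real (2*\<tau>*(card (verts C) - 1))"
      by (metis of_int_le_iff of_int_mult of_int_of_nat_eq)
    also have "\<dots> = 2 * real \<tau> * (real (card (verts C)) - 1)"
      using cV by (simp add: V_def of_nat_diff)
    finally show ?thesis using kpos by (simp add: D_def pos_le_divide_eq)
  qed
qed

end
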